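(* For all integers $m\ge1$, $n>2m$ and all $\sigma_1^2,\dots,\sigma_n^2>0$, letting $L\subset G^{r}$ with $|L|=2m$ consist of $2m$ arms of $G^{r}$ with the largest variances, we have $\frac{\sum_{i\in L}\sigma_i^2}{\sum_{j\in G^{r}}\sigma_j^2}\ge\frac13$ and \[ \Big(1-\frac{\sum_{i\in L}\sigma_i^2}{\sum_{j\in G^{r}}\sigma_j^2}\Big)\ln(m)\le 4\,\mathrm{Ent}(\sigma^2_L). \]
   Context: For a positive vector $a$, $\mathrm{Ent}(a)=-\sum_i\hat a_i\ln\hat a_i$ with $\hat a_i=a_i/\sum_ja_j$; $\sigma^2_S=(\sigma_i^2)_{i\in S}$. Let $\underline\sigma^2=\min_i\sigma_i^2$, $G_j=\{i\in[n]:2^{j-1}\le\sigma_i^2/\underline\sigma^2<2^j\}$ for $j=1,\dots,k$ covering $[n]$. $G'_j=G_j$ if $|G_j|\le2m$, otherwise $G'_j\subset G_j$ with $|G'_j|=2m$; $G^{r}=\bigcup_jG'_j$, the choices made to maximize $\mathrm{Ent}(\sigma^2_{G^{r}})$. *)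

theory Defs
  imports Complex_Main
begin

definition Ent :: "(nat \<Rightarrow> real) \<Rightarrow> nat set \<Rightarrow> real" where
  "Ent a S = - (\<Sum>i\<in>S. (a i / (\<Sum>j\<in>S. a j)) * ln (a i / (\<Sum>j\<in>S. a j)))"

definition min_var :: "nat \<Rightarrow> (nat \<Rightarrow> real) \<Rightarrow> real" where
  "min_var n s = Min (s ` {1..n})"

definition grp :: "nat \<Rightarrow> (nat \<Rightarrow> real) \<Rightarrow> nat \<Rightarrow> nat set" where
  "grp n s j = {i \<in> {1..n}. 2 ^ (j - 1) \<le> s i / min_var n s \<and> s i / min_var n s < 2 ^ j}"

text \<open>Gr is an admissible reduced set: a union over j >= 1 of sets G'_j, where
  G'_j = G_j if |G_j| <= 2m, and otherwise G'_j is a subset of G_j of size 2m.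
  (Groups with index beyond the covering index k are empty, so taking the union
  over all j >= 1 is the same as over j = 1..k.)\<close>
definition admissible_reduced :: "nat \<Rightarrow> nat \<Rightarrow> (nat \<Rightarrow> real) \<Rightarrow> nat set \<Rightarrow> bool" where
  "admissible_reduced m n s Gr \<longleftrightarrow>
     (\<exists>G' :: nat \<Rightarrow> nat set.
        (\<forall>j\<ge>1. (card (grp n s j) \<le> 2 * m \<longrightarrow> G' j = grp n s j) \<and>
                (2 * m < card (grp n s j) \<longrightarrow> G' j \<subseteq> grp n s j \<and> card (G' j) = 2 * m)) \<and>
        Gr = (\<Union>j\<in>{1..}. G' j))"

definition is_Gr :: "nat \<Rightarrow> nat \<Rightarrow> (nat \<Rightarrow> real) \<Rightarrow> nat set \<Rightarrow> bool" where
  "is_Gr m n s Gr \<longleftrightarrow> admissible_reduced m n s Gr \<and>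
     (\<forall>H. admissible_reduced m n s H \<longrightarrow> Ent s H \<le> Ent s Gr)"

end

theory Submission
  imports Defs
begin

lemma h_mono:
  fixes p q :: real
  assumes "0 < q" "q \<le> p" "p \<le> exp (-1)"
  shows "- (q * ln q) \<le> - (p * ln p)"
proof -
  have pp: "p > 0" using assms by linarith
  have "ln (p / q) \<le> p / q - 1" using assms pp by (intro ln_le_minus_one) auto
  hence a: "q * ln (p / q) \<le> p - q" using assms by (simp add: field_simps)
  have lpq: "ln (p / q) = ln p - ln q" using assms pp by (simp add: ln_div)
  have "ln p \<le> ln (exp (-1))" using pp assms by (subst ln_le_cancel_iff) auto
  hence b: "ln p \<le> -1" by simp
  have c0: "(p - q) * ln p \<le> (p - q) * (-1)" using b assms by (intro mult_left_mono) auto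
  have c: "(p - q) * ln p \<le> q - p" using c0 by simp
  define X where "X = (p - q) * ln p"
  define Y where "Y = q * ln (p / q)"
  have "- (p * ln p) - (- (q * ln q)) = - X - Y"
    by (simp add: X_def Y_def lpq algebra_simps)
  moreover have "- X - Y \<ge> 0" using a c unfolding X_def Y_def by linarith
  ultimately show ?thesis by linarith
qed

lemma h_nonneg:
  fixes p :: real
  assumes "0 < p" "p \<le> 1"
  shows "0 \<le> - (p * ln p)"
proof -
  have "ln p \<le> 0" using assms by simp
  thus ?thesis using assms by (simp add: mult_nonneg_nonpos)
qed

lemma ln_ineq:
  assumes "(m::nat) \<ge> 1"
  shows "6 * real m * ln (real m) \<le> (8 * real m - 8) * ln (2 * real m)"
proof -
  have l2: "ln (2 * real m) = ln 2 + ln (real m)" using assms by (simp add: ln_mult)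
  have lm: "ln (real m) \<ge> 0" using assms by simp
  have l2p: "ln (2::real) > 0" by simp
  have key: "(8 - 2 * real m) * ln (real m) \<le> (8 * real m - 8) * ln 2"
  proof (cases "m \<ge> 4 \<or> m = 1")
    case True
    then consider "m \<ge> 4" | "m = 1" by blast
    then show ?thesis
    proof cases
      case 2 thus ?thesis using l2p by simp
    next
      case 1
    hence "(8 - 2 * real m) * ln (real m) \<le> 0" using lm
      by (intro mult_nonpos_nonneg) auto
    moreover have "0 \<le> (8 * real m - 8) * ln 2" using assms l2p by simp
    ultimately show ?thesis by linarith
  qed
  next
    case False
    have "ln (real m) \<le> ln 4" using False assms by (subst ln_le_cancel_iff) auto
    also have "ln (4::real) = 2 * ln 2"
      using ln_realpow[of 2 2] by simp
    finally have "ln (real m) \<le> 2 * ln 2" .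
    hence "(8 - 2 * real m) * ln (real m) \<le> (8 - 2 * real m) * (2 * ln 2)"
      using False by (intro mult_left_mono) auto
    also have "\<dots> \<le> (8 * real m - 8) * ln 2"
      using assms l2p False by (auto simp: algebra_simps)
    finally show ?thesis .
  qed
  show ?thesis using key l2 by (simp add: algebra_simps)
qed

lemma geom2: "(\<Sum>j<k. (2::real) ^ j) = 2 ^ k - 1"
  by (induction k) auto

theorem lemma12:
  fixes m n :: nat and s :: "nat \<Rightarrow> real" and Gr L :: "nat set"
  assumes "m \<ge> 1" and "n > 2 * m"
    and "\<And>i. i \<in> {1..n} \<Longrightarrow> s i > 0"
    and "is_Gr m n s Gr"
    and "L \<subseteq> Gr" and "card L = 2 * m"
    and "\<forall>i\<in>L. \<forall>j\<in>Gr - L. s j \<le> s i"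
  shows "(\<Sum>i\<in>L. s i) / (\<Sum>j\<in>Gr. s j) \<ge> 1 / 3
    \<and> (1 - (\<Sum>i\<in>L. s i) / (\<Sum>j\<in>Gr. s j)) * ln (real m) \<le> 4 * Ent s L"
proof -
  obtain G' where G'1: "\<forall>j\<ge>1. (card (grp n s j) \<le> 2 * m \<longrightarrow> G' j = grp n s j) \<and>
                (2 * m < card (grp n s j) \<longrightarrow> G' j \<subseteq> grp n s j \<and> card (G' j) = 2 * m)"
    and GrU: "Gr = (\<Union>j\<in>{1..}. G' j)"
    using assms(4) unfolding is_Gr_def admissible_reduced_def by blast
  define mn where "mn = min_var n s"
  have n1: "n \<ge> 1" using assms by linarith
  have fin1: "finite (s ` {1..n})" "s ` {1..n} \<noteq> {}" using n1 by auto
  have mnpos: "mn > 0" unfolding mn_def min_var_def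
    using fin1 assms(3) by (subst Min_gr_iff) auto
  have mnle: "mn \<le> s i" if "i \<in> {1..n}" for i
    unfolding mn_def min_var_def using fin1 that by (intro Min_le) auto
  have grp_sub: "grp n s j \<subseteq> {1..n}" for j by (auto simp: grp_def)
  have G'sub: "G' j \<subseteq> grp n s j" if "j \<ge> 1" for j
    using G'1 that by (cases "card (grp n s j) \<le> 2*m") auto
  have G'card: "card (G' j) \<le> 2 * m" if "j \<ge> 1" for j
    using G'1 that by (cases "card (grp n s j) \<le> 2*m") auto
  have finG': "finite (G' j)" if "j \<ge> 1" for j
    using G'sub[OF that] grp_sub by (meson finite_atLeastAtMost finite_subset)
  have Gr_sub: "Gr \<subseteq> {1..n}" using GrU G'sub grp_sub by fastforce
  have finGr: "finite Gr" using Gr_sub finite_subset by blast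
  have inGr: "\<exists>j\<ge>1. i \<in> G' j" if "i \<in> Gr" for i using GrU that by auto
  have grp_mem: "2^(j-1) * mn \<le> s i \<and> s i < 2^j * mn" if "i \<in> grp n s j" for i j
    using that mnpos unfolding grp_def mn_def[symmetric]
    by (auto simp: pos_le_divide_eq pos_divide_less_eq)
  have grp_memI: "i \<in> grp n s j" if "i \<in> {1..n}" "2^(j-1) * mn \<le> s i" "s i < 2^j * mn" for i j
    using that mnpos unfolding grp_def mn_def[symmetric]
    by (auto simp: pos_le_divide_eq pos_divide_less_eq)
  have grp_disj: "j = k" if "i \<in> grp n s j" "i \<in> grp n s k" for i j k
  proof (rule ccontr)
    assume "j \<noteq> k"
    then consider "j < k" | "k < j" by linarith
    thus False
    proof cases
      case 1
      hence "(2::real)^j \<le> 2^(k-1)" by (intro power_increasing) auto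
      thus False using grp_mem[OF that(1)] grp_mem[OF that(2)] mnpos
        by (smt (verit) mult_right_mono)
    next
      case 2
      hence "(2::real)^k \<le> 2^(j-1)" by (intro power_increasing) auto
      thus False using grp_mem[OF that(1)] grp_mem[OF that(2)] mnpos
        by (smt (verit) mult_right_mono)
    qed
  qed
  have GrG': "i \<in> G' j" if h: "i \<in> Gr" "i \<in> grp n s j" for i j
  proof -
    obtain k where k: "k \<ge> 1" "i \<in> G' k" using inGr[OF h(1)] by blast
    have "k = j" using grp_disj[of i k j] G'sub[OF k(1)] h(2) k(2) by blast
    thus ?thesis using k by simp
  qed
  have spos: "s i > 0" if "i \<in> Gr" for i using assms(3) Gr_sub that by blast
  have finL: "finite L" using assms(5) finGr finite_subset by blast
  have Lne: "L \<noteq> {}" using assms(6,1) by auto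
  define t where "t = Min (s ` L)"
  obtain i0 where i0: "i0 \<in> L" "s i0 = t"
  proof -
    have "t \<in> s ` L" unfolding t_def using finL Lne by (intro Min_in) auto
    thus ?thesis using that by auto
  qed
  have tmin: "t \<le> s i" if "i \<in> L" for i unfolding t_def using finL that by auto
  obtain j0 where j0: "j0 \<ge> 1" "i0 \<in> G' j0" using inGr i0 assms(5) by blast
  have i0g: "i0 \<in> grp n s j0" using G'sub j0 by blast
  define u where "u = 2^(j0-1) * mn"
  have upos: "u > 0" using mnpos by (simp add: u_def)
  have pow: "(2::real)^j0 = 2 * 2^(j0-1)" using j0(1) by (cases j0) auto
  have ut: "u \<le> t" "t < 2 * u" using grp_mem[OF i0g] i0 pow by (auto simp: u_def)
  define T where "T = Gr - L"
  define T1 where "T1 = {i\<in>T. u \<le> s i}"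
  define T2 where "T2 = {i\<in>T. s i < u}"
  define A where "A = L \<inter> grp n s j0"
  define B where "B = L - A"
  define S where "S = (\<Sum>i\<in>L. s i)"
  define R where "R = (\<Sum>i\<in>T. s i)"
  have finT: "finite T" using finGr by (simp add: T_def)
  have Tle: "s i \<le> t" if "i \<in> T" for i using assms(7) i0 that by (auto simp: T_def)
  have T1G: "T1 \<subseteq> G' j0"
  proof
    fix i assume "i \<in> T1"
    hence "i \<in> Gr" "u \<le> s i" "s i \<le> t" using Tle by (auto simp: T1_def T_def)
    moreover hence "i \<in> grp n s j0" using Gr_sub ut pow
      by (intro grp_memI) (auto simp: u_def)
    ultimately show "i \<in> G' j0" using GrG' by blast
  qed
  have AG: "A \<subseteq> G' j0" using GrG' assms(5) by (auto simp: A_def)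
  have AT1: "A \<inter> T1 = {}" by (auto simp: A_def T1_def T_def)
  have cardAT1: "card A + card T1 \<le> 2 * m"
  proof -
    have "card A + card T1 = card (A \<union> T1)"
      using AT1 finL finT by (intro card_Un_disjoint[symmetric]) (auto simp: A_def T1_def)
    also have "\<dots> \<le> card (G' j0)" using AG T1G finG'[OF j0(1)] by (intro card_mono) auto
    finally show ?thesis using G'card[OF j0(1)] by linarith
  qed
  have cardB: "card B = 2 * m - card A" using assms(6) finL
    unfolding B_def A_def using card_Diff_subset[of "L \<inter> grp n s j0" L] by auto
  have cardA: "card A \<le> 2 * m" using cardAT1 by linarith
  have Bge: "2 * u \<le> s i" if "i \<in> B" for i
  proof -
    have iL: "i \<in> L" "i \<notin> grp n s j0" using that by (auto simp: B_def A_def)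
    have "i \<in> {1..n}" using iL assms(5) Gr_sub by blast
    moreover have "u \<le> s i" using tmin[OF iL(1)] ut by linarith
    ultimately have "\<not> s i < 2^j0 * mn" using iL(2) grp_memI[of i j0] by (auto simp: u_def)
    thus ?thesis using pow by (simp add: u_def)
  qed
  have SAB: "S = sum s A + sum s B" unfolding S_def B_def using finL
    using sum.subset_diff[of A L s] by (auto simp: A_def add.commute)
  have SA: "real (card A) * t \<le> sum s A" using tmin by (intro sum_bounded_below) (auto simp: A_def)
  have SB: "real (card B) * (2 * u) \<le> sum s B" using Bge by (intro sum_bounded_below) auto
  have S2m: "2 * real m * t \<le> S" unfolding S_def using sum_bounded_below[of L t s] tmin assms(6) by auto
  have RT1: "sum s T1 \<le> real (card T1) * t" using Tle by (intro sum_bounded_above) (auto simp: T1_def)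
  have RT12: "R = sum s T1 + sum s T2" unfolding R_def
    using finT by (subst sum.union_disjoint[symmetric]) (auto simp: T1_def T2_def intro: sum.cong)
  have RT2: "sum s T2 \<le> 4 * real m * u"
  proof -
    have T2eq: "T2 = (\<Union>j\<in>{1..<j0}. T2 \<inter> grp n s j)"
    proof
      show "T2 \<subseteq> (\<Union>j\<in>{1..<j0}. T2 \<inter> grp n s j)"
      proof
        fix i assume iT: "i \<in> T2"
        hence iG: "i \<in> Gr" "s i < u" by (auto simp: T2_def T_def)
        obtain k where k: "k \<ge> 1" "i \<in> G' k" using inGr[OF iG(1)] by blast
        have ik: "i \<in> grp n s k" using G'sub[OF k(1)] k(2) by blast
        have "2^(k-1) * mn < 2^(j0-1) * mn" using grp_mem[OF ik] iG(2) by (simp add: u_def)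
        hence "(2::real)^(k-1) < 2^(j0-1)" using mnpos by simp
        hence "k - 1 < j0 - 1" by simp
        hence "k \<in> {1..<j0}" using k(1) by simp
        thus "i \<in> (\<Union>j\<in>{1..<j0}. T2 \<inter> grp n s j)" using iT ik by blast
      qed
    qed auto
    have finT2: "finite T2" using finT by (simp add: T2_def)
    have "sum s T2 = (\<Sum>j\<in>{1..<j0}. sum s (T2 \<inter> grp n s j))"
      apply (subst T2eq)
      apply (rule sum.UNION_disjoint)
      using finT2 grp_disj by auto
    also have "\<dots> \<le> (\<Sum>j\<in>{1..<j0}. 2 * real m * mn * 2^j)"
    proof (rule sum_mono)
      fix j assume j: "j \<in> {1..<j0}"
      have sub: "T2 \<inter> grp n s j \<subseteq> G' j" using GrG' by (auto simp: T2_def T_def)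
      have c: "card (T2 \<inter> grp n s j) \<le> 2 * m"
        using card_mono[OF finG' sub] G'card j by (meson atLeastLessThan_iff le_trans)
      have "sum s (T2 \<inter> grp n s j) \<le> real (card (T2 \<inter> grp n s j)) * (2^j * mn)"
        using grp_mem by (intro sum_bounded_above) (auto intro: less_imp_le)
      also have "\<dots> \<le> real (2 * m) * (2^j * mn)"
        using c mnpos by (intro mult_right_mono) auto
      finally show "sum s (T2 \<inter> grp n s j) \<le> 2 * real m * mn * 2^j" by (simp add: mult_ac)
    qed
    also have "\<dots> = 2 * real m * mn * (\<Sum>j\<in>{1..<j0}. 2^j)" by (simp add: sum_distrib_left)
    also have "\<dots> \<le> 2 * real m * mn * 2^j0"
    proof -
      have "(\<Sum>j\<in>{1..<j0}. (2::real)^j) \<le> (\<Sum>j<j0. 2^j)"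
        by (intro sum_mono2) auto
      also have "\<dots> \<le> 2^j0" by (simp add: geom2)
      finally show ?thesis using mnpos by (intro mult_left_mono) auto
    qed
    also have "\<dots> = 4 * real m * u" by (simp add: u_def pow)
    finally show ?thesis .
  qed
  have SR: "(\<Sum>j\<in>Gr. s j) = S + R" unfolding S_def R_def T_def
    using finGr assms(5) sum.subset_diff[of L Gr s] by (auto simp: add.commute)
  have tpos: "t > 0" using spos i0 assms(5) by auto
  have Spos: "S > 0" 
  proof -
    have "2 * real m * t > 0" using tpos assms(1) by simp
    thus ?thesis using S2m by linarith
  qed
  define a where "a = real (card A)"
  define b where "b = real (card B)"
  define c where "c = real (card T1)"
  have ab: "a + b = 2 * real m" using cardB cardA by (simp add: a_def b_def)
  have cb: "c \<le> b" using cardAT1 cardB by (simp add: c_def b_def)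
  have a0: "a \<ge> 0" "b \<ge> 0" "c \<ge> 0" by (auto simp: a_def b_def c_def)
  have Sge: "a * t + b * (2 * u) \<le> S" using SAB SA SB by (simp add: a_def b_def)
  have Rle: "R \<le> c * t + 4 * real m * u" using RT12 RT1 RT2 by (simp add: c_def)
  have R0: "R \<ge> 0" unfolding R_def using spos by (intro sum_nonneg) (auto simp: T_def less_imp_le)
  have ct: "c * t \<le> b * t" using cb tpos by (intro mult_right_mono) auto
  have bneg: "b * (t - 2 * u) \<le> 0" using a0 ut by (intro mult_nonneg_nonpos) auto
  have apos: "a * (t - u) \<ge> 0" using a0 ut by auto
  have R2S: "R \<le> 2 * S"
  proof -
    have "4 * real m * u = 2 * (a + b) * u" using ab by simp
    thus ?thesis using Sge Rle ct bneg apos by (simp add: algebra_simps) 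
  qed
  have claim1: "S / (S + R) \<ge> 1 / 3" using Spos R0 R2S by (simp add: field_simps)
  have R6: "R \<le> 6 * real m * t"
  proof -
    have "b \<le> 2 * real m" using ab a0 by linarith
    hence "b * t \<le> 2 * real m * t" using tpos by (intro mult_right_mono) auto
    moreover have "4 * real m * u \<le> 4 * real m * t" using ut by (intro mult_left_mono) auto
    ultimately show ?thesis using Rle ct by linarith
  qed
  define q where "q = t / S"
  have qpos: "q > 0" using tpos Spos by (simp add: q_def)
  have q2m: "2 * real m * q \<le> 1" using S2m Spos by (simp add: q_def field_simps)
  have rle: "1 - S / (S + R) \<le> 6 * real m * q"
  proof -
    have "1 - S / (S + R) = R / (S + R)" using Spos R0 by (simp add: field_simps)
    also have "\<dots> \<le> R / S" using Spos R0 by (intro divide_left_mono) auto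
    also have "\<dots> \<le> 6 * real m * t / S" using R6 Spos by (intro divide_right_mono) auto
    finally show ?thesis by (simp add: q_def)
  qed
  have r0: "0 \<le> 1 - S / (S + R)" using Spos R0 by (simp add: field_simps)
  define p where "p i = s i / S" for i
  have EntE: "Ent s L = (\<Sum>i\<in>L. - (p i * ln (p i)))"
    unfolding Ent_def p_def S_def by (simp add: sum_negf)
  have ppos: "p i > 0" if "i \<in> L" for i using spos assms(5) that Spos by (auto simp: p_def)
  have ple1: "p i \<le> 1" if "i \<in> L" for i
  proof -
    have "s i \<le> S" unfolding S_def using finL that spos assms(5)
      by (intro member_le_sum) (auto intro: less_imp_le)
    thus ?thesis using Spos by (simp add: p_def)
  qed
  have qp: "q \<le> p i" if "i \<in> L" for i using tmin[OF that] Spos by (simp add: p_def q_def divide_right_mono)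
  have psum: "(\<Sum>i\<in>L. p i) = 1" using Spos unfolding p_def S_def by (simp add: sum_divide_distrib[symmetric])
  define K where "K = {i\<in>L. p i \<le> exp (-1)}"
  have finK: "finite K" using finL by (simp add: K_def)
  have cLK: "card (L - K) \<le> 2"
  proof (rule ccontr)
    assume "\<not> card (L - K) \<le> 2"
    hence c3: "card (L - K) \<ge> 3" by linarith
    hence ne: "L - K \<noteq> {}" by (metis card.empty not_numeral_le_zero)
    have "(\<Sum>i\<in>L - K. exp (-1)) < (\<Sum>i\<in>L - K. p i)"
      using finL ne by (intro sum_strict_mono) (auto simp: K_def)
    also have "\<dots> \<le> (\<Sum>i\<in>L. p i)" using finL ppos by (intro sum_mono2) (auto intro: less_imp_le)
    finally have "real (card (L - K)) * exp (-1) < 1" using psum by simp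
    moreover have "3 * exp (-1) \<le> real (card (L - K)) * exp (-1)" using c3 by (intro mult_right_mono) auto
    moreover have "exp (-1::real) \<ge> 1 / 3" using exp_le by (simp add: exp_minus field_simps)
    ultimately show False by linarith
  qed
  have cK: "real (card K) \<ge> 2 * real m - 2"
  proof -
    have "card K + card (L - K) = card L" 
    proof -
      have KL: "K \<subseteq> L" by (auto simp: K_def)
      have "card K \<le> card L" using card_mono[OF finL KL] .
      moreover have "card (L - K) = card L - card K" using card_Diff_subset[OF finK KL] .
      ultimately show ?thesis by linarith
    qed
    thus ?thesis using cLK assms(6) by linarith
  qed
  have "q * 1 \<le> q * (2 * real m)" using qpos assms(1) by (intro mult_left_mono) auto
  hence q1: "q \<le> 1" using q2m by (simp add: mult_ac)
  have hq0: "0 \<le> - (q * ln q)" using qpos q1 by (intro h_nonneg)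
  have Ent1: "(\<Sum>i\<in>K. - (p i * ln (p i))) \<le> Ent s L"
    unfolding EntE
  proof (rule sum_mono2[OF finL])
    show "K \<subseteq> L" by (auto simp: K_def)
    show "0 \<le> - (p i * ln (p i))" if "i \<in> L - K" for i
    proof -
      have iL: "i \<in> L" using that by simp
      show ?thesis using h_nonneg[OF ppos[OF iL] ple1[OF iL]] .
    qed
  qed
  have Ent2: "real (card K) * (- (q * ln q)) \<le> (\<Sum>i\<in>K. - (p i * ln (p i)))"
    using qpos qp by (intro sum_bounded_below h_mono) (auto simp: K_def)
  have Ent3: "(2 * real m - 2) * (- (q * ln q)) \<le> Ent s L"
  proof -
    have "(2 * real m - 2) * (- (q * ln q)) \<le> real (card K) * (- (q * ln q))"
      using mult_right_mono[OF cK hq0] .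
    thus ?thesis using Ent1 Ent2 by linarith
  qed
  have lnq: "ln (2 * real m) \<le> - ln q"
  proof -
    have "ln (2 * real m * q) \<le> 0" using q2m qpos assms(1) by simp
    thus ?thesis using qpos assms(1) by (simp add: ln_mult)
  qed
  have lnm0: "ln (real m) \<ge> 0" using assms(1) by simp
  have "(1 - S / (S + R)) * ln (real m) \<le> 6 * real m * q * ln (real m)"
    using rle lnm0 by (intro mult_right_mono) auto
  also have "\<dots> = q * (6 * real m * ln (real m))" by simp
  also have "\<dots> \<le> q * ((8 * real m - 8) * ln (2 * real m))"
    using ln_ineq[OF assms(1)] qpos by (intro mult_left_mono) auto
  also have "\<dots> \<le> q * ((8 * real m - 8) * (- ln q))"
    using lnq qpos assms(1) by (intro mult_left_mono) auto
  also have "\<dots> = 4 * ((2 * real m - 2) * (- (q * ln q)))" by (simp add: algebra_simps)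
  also have "\<dots> \<le> 4 * Ent s L" using Ent3 by linarith
  finally have claim2: "(1 - S / (S + R)) * ln (real m) \<le> 4 * Ent s L" .
  have SL: "(\<Sum>i\<in>L. s i) = S" by (simp add: S_def)
  show ?thesis unfolding SL SR using claim1 claim2 by blast
qed

end
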